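(* Let $k\ge1$ and let $G\in\mathfrak A$ contain no subgraph isomorphic to $\Gamma_{k+1}$. If $H$ is a subgraph of $G$ isomorphic to $\Gamma_k$, then every vertex $q\in V(G)$ is an $H$-twin of some vertex of $H$.
   Context: $\mathfrak A$ is the class of maximal triangle-free graphs with at least two vertices containing no induced cycle of length six. (Maximal triangle-free: no triangle, and adding any new edge creates a triangle.) Andrásfai graph $\Gamma_k$: vertex set $\mathbb Z/(3k-1)\mathbb Z$, $ij$ an edge iff $i-j\in\{k,\dots,2k-1\}$ mod $3k-1$. For a subgraph $H$ of $G$, $q\in V(H)$, $q'\in V(G)$, $q'$ is an $H$-twin of $q$ if $\mathrm N(q)\cap V(H)=\mathrm N(q')\cap V(H)$ (neighbourhoods in $G$). *)

theory Defs
  imports Main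
begin

definition simple_graph :: "'a set \<Rightarrow> ('a \<Rightarrow> 'a \<Rightarrow> bool) \<Rightarrow> bool" where
  "simple_graph V E \<longleftrightarrow> finite V \<and> (\<forall>x y. E x y \<longrightarrow> E y x)
     \<and> (\<forall>x. \<not> E x x) \<and> (\<forall>x y. E x y \<longrightarrow> x \<in> V \<and> y \<in> V)"

definition triangle_free :: "'a set \<Rightarrow> ('a \<Rightarrow> 'a \<Rightarrow> bool) \<Rightarrow> bool" where
  "triangle_free V E \<longleftrightarrow>
     \<not> (\<exists>x\<in>V. \<exists>y\<in>V. \<exists>z\<in>V. E x y \<and> E y z \<and> E x z)"

text \<open>Maximal triangle-free: triangle-free, and adding any new edge xy
(x, y distinct and non-adjacent) creates a triangle, i.e. x and y have a
common neighbour.\<close>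
definition maximal_triangle_free :: "'a set \<Rightarrow> ('a \<Rightarrow> 'a \<Rightarrow> bool) \<Rightarrow> bool" where
  "maximal_triangle_free V E \<longleftrightarrow> triangle_free V E \<and>
     (\<forall>x\<in>V. \<forall>y\<in>V. x \<noteq> y \<and> \<not> E x y \<longrightarrow> (\<exists>z\<in>V. E x z \<and> E y z))"

definition has_induced_C6 :: "'a set \<Rightarrow> ('a \<Rightarrow> 'a \<Rightarrow> bool) \<Rightarrow> bool" where
  "has_induced_C6 V E \<longleftrightarrow> (\<exists>c :: nat \<Rightarrow> 'a. inj_on c {0..<6} \<and> c ` {0..<6} \<subseteq> V \<and>
     (\<forall>i<6. \<forall>j<6. E (c i) (c j) \<longleftrightarrow> (i + 6 - j) mod 6 \<in> {1, 5}))"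

definition classA :: "'a set \<Rightarrow> ('a \<Rightarrow> 'a \<Rightarrow> bool) \<Rightarrow> bool" where
  "classA V E \<longleftrightarrow> simple_graph V E \<and> card V \<ge> 2 \<and> maximal_triangle_free V E
     \<and> \<not> has_induced_C6 V E"

text \<open>Andrasfai graph Gamma_k: vertices {0..<3k-1} (representing Z/(3k-1)),
ij an edge iff i - j mod (3k-1) lies in {k, ..., 2k-1}.\<close>
definition andrasfai_verts :: "nat \<Rightarrow> nat set" where
  "andrasfai_verts k = {0..<3*k-1}"

definition andrasfai_edge :: "nat \<Rightarrow> nat \<Rightarrow> nat \<Rightarrow> bool" where
  "andrasfai_edge k i j \<longleftrightarrow> (i + (3*k-1) - j) mod (3*k-1) \<in> {k..2*k-1}"

text \<open>An embedding of Gamma_k as a (not necessarily induced) subgraph of G: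
an injective map on vertices sending edges to edges. The subgraph H it
determines has vertex set f ` andrasfai_verts k.\<close>
definition andrasfai_subgraph_emb ::
    "nat \<Rightarrow> 'a set \<Rightarrow> ('a \<Rightarrow> 'a \<Rightarrow> bool) \<Rightarrow> (nat \<Rightarrow> 'a) \<Rightarrow> bool" where
  "andrasfai_subgraph_emb k V E f \<longleftrightarrow> inj_on f (andrasfai_verts k)
     \<and> f ` andrasfai_verts k \<subseteq> V
     \<and> (\<forall>i\<in>andrasfai_verts k. \<forall>j\<in>andrasfai_verts k.
          andrasfai_edge k i j \<longrightarrow> E (f i) (f j))"

definition contains_andrasfai :: "nat \<Rightarrow> 'a set \<Rightarrow> ('a \<Rightarrow> 'a \<Rightarrow> bool) \<Rightarrow> bool" where
  "contains_andrasfai k V E \<longleftrightarrow> (\<exists>f. andrasfai_subgraph_emb k V E f)"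

definition is_twin :: "('a \<Rightarrow> 'a \<Rightarrow> bool) \<Rightarrow> 'a set \<Rightarrow> 'a \<Rightarrow> 'a \<Rightarrow> bool" where
  "is_twin E VH q q' \<longleftrightarrow> {x \<in> VH. E q x} = {x \<in> VH. E q' x}"

end

theory Submission
  imports Defs
begin


lemma modsub: "(i::nat) < n \<Longrightarrow> j < n \<Longrightarrow> (i + n - j) mod n = (if j \<le> i then i - j else i + n - j)"
proof (cases "j \<le> i")
  case True
  assume "i < n"
  have e: "i + n - j = (i - j) + n" using True by arith
  have "(i - j + n) mod n = i - j" using \<open>i<n\<close> by (metis mod_add_self2 mod_less less_imp_diff_less)
  then show ?thesis using True e by presburger
next
  case False
  assume "i < n"
  have "i + n - j < n" using False \<open>i<n\<close> by arith
  then show ?thesis using False by (metis mod_less)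
qed

lemma edge_iff:
  assumes "i < 3*k-1" "j < 3*k-1"
  shows "andrasfai_edge k i j \<longleftrightarrow> (k + j \<le> i \<and> i < 2*k + j) \<or> (k + i \<le> j \<and> j < 2*k + i)"
proof -
  have "andrasfai_edge k i j \<longleftrightarrow> (if j \<le> i then i - j else i + (3*k-1) - j) \<in> {k..2*k-1}"
    unfolding andrasfai_edge_def using modsub[OF assms] by simp
  also have "\<dots> \<longleftrightarrow> (k + j \<le> i \<and> i < 2*k + j) \<or> (k + i \<le> j \<and> j < 2*k + i)"
    using assms by (cases "j \<le> i") auto
  finally show ?thesis .
qed

lemma common_nbr:
  fixes k i j :: nat
  assumes "k \<ge> 1" "i < 3*k-1" "j < 3*k-1" "i \<noteq> j" "\<not> andrasfai_edge k i j"
  shows "\<exists>m<3*k-1. andrasfai_edge k i m \<and> andrasfai_edge k j m"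
proof -
  have ne: "\<not> ((k + j \<le> i \<and> i < 2*k + j) \<or> (k + i \<le> j \<and> j < 2*k + i))" using assms edge_iff by blast
  have "\<exists>m<3*k-1. ((k + m \<le> i \<and> i < 2*k + m) \<or> (k + i \<le> m \<and> m < 2*k + i)) \<and> ((k + m \<le> j \<and> j < 2*k + m) \<or> (k + j \<le> m \<and> m < 2*k + j))"
  proof (cases "i < j")
    case True
    show ?thesis
    proof (cases "2*k + i \<le> j")
      case True then show ?thesis using ne assms \<open>i<j\<close> by (intro exI[of _ "i+k"]) auto
    next
      case False
      then show ?thesis
      proof (cases "j + k < 3*k-1")
        case True then show ?thesis using ne assms \<open>i<j\<close> by (intro exI[of _ "j+k"]) auto
      next
        case False then show ?thesis using ne assms \<open>i<j\<close> \<open>\<not> 2*k+i \<le> j\<close> by (intro exI[of _ "i-k"]) auto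
      qed
    qed
  next
    case False
    then have "j < i" using assms by simp
    show ?thesis
    proof (cases "2*k + j \<le> i")
      case True then show ?thesis using ne assms \<open>j<i\<close> by (intro exI[of _ "j+k"]) auto
    next
      case False
      then show ?thesis
      proof (cases "i + k < 3*k-1")
        case True then show ?thesis using ne assms \<open>j<i\<close> by (intro exI[of _ "i+k"]) auto
      next
        case False then show ?thesis using ne assms \<open>j<i\<close> \<open>\<not> 2*k+j \<le> i\<close> by (intro exI[of _ "j-k"]) auto
      qed
    qed
  qed
  then show ?thesis using edge_iff assms by (metis)
qed

lemma edge_sym: "i < 3*k-1 \<Longrightarrow> j < 3*k-1 \<Longrightarrow> andrasfai_edge k i j \<longleftrightarrow> andrasfai_edge k j i"
  by (simp add: edge_iff) arith

lemma edge_irr: "k \<ge> 1 \<Longrightarrow> i < 3*k-1 \<Longrightarrow> \<not> andrasfai_edge k i i"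
  by (simp add: edge_iff)

lemma edge_notri: "a < 3*k-1 \<Longrightarrow> b < 3*k-1 \<Longrightarrow> c < 3*k-1 \<Longrightarrow> andrasfai_edge k a b \<Longrightarrow> andrasfai_edge k b c \<Longrightarrow> andrasfai_edge k a c \<Longrightarrow> False"
  by (simp add: edge_iff) arith

definition NB :: "nat \<Rightarrow> nat \<Rightarrow> nat set" where
  "NB k j = {i. i < 3*k-1 \<and> andrasfai_edge k j i}"

lemma arc:
  assumes k: "k \<ge> 1" and sub: "T \<subseteq> {0..<3*k-1}"
    and ind: "\<And>a b. a \<in> T \<Longrightarrow> b \<in> T \<Longrightarrow> \<not> andrasfai_edge k a b"
    and mx: "\<And>i. i < 3*k-1 \<Longrightarrow> i \<notin> T \<Longrightarrow> \<exists>t\<in>T. andrasfai_edge k i t"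
  shows "\<exists>j<3*k-1. T = NB k j"
proof -
  have fin: "finite T" using sub finite_subset by blast
  have "T \<noteq> {}" using mx[of 0] k by auto
  define m where "m = Min T"
  have mT: "m \<in> T" and mle: "\<And>t. t \<in> T \<Longrightarrow> m \<le> t" using fin \<open>T \<noteq> {}\<close> by (auto simp: m_def)
  define L where "L = {t \<in> T. t \<le> m + k - 1}"
  have finL: "finite L" using fin by (auto simp: L_def)
  have "m \<in> L" using mT k by (auto simp: L_def)
  define a where "a = Max L"
  have aL: "a \<in> L" unfolding a_def using finL \<open>m \<in> L\<close> by (intro Max_in) auto
  have ale: "\<And>t. t \<in> L \<Longrightarrow> t \<le> a" unfolding a_def using finL by simp
  have aT: "a \<in> T" and am: "a \<le> m + k - 1" "m \<le> a" using aL mle by (auto simp: L_def)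
  have bnd: "\<And>t. t \<in> T \<Longrightarrow> t < 3*k-1" using sub by auto
  have pos: "\<And>t. t \<in> T \<Longrightarrow> (m \<le> t \<and> t \<le> a) \<or> a + 2*k \<le> t"
  proof -
    fix t assume tT: "t \<in> T"
    show "(m \<le> t \<and> t \<le> a) \<or> a + 2*k \<le> t"
    proof (cases "t \<le> m + k - 1")
      case True then have "t \<in> L" using tT by (auto simp: L_def)
      then show ?thesis using ale mle tT by auto
    next
      case False
      have "\<not> andrasfai_edge k m t" "\<not> andrasfai_edge k a t" using ind tT mT aT by auto
      then show ?thesis using False am bnd[OF tT] bnd[OF mT] bnd[OF aT] mle[OF tT] k by (simp add: edge_iff) arith
    qed
  qed
  define j where "j = (if a \<le> 2*k-2 then a + k else a - (2*k-1))"
  have j: "j < 3*k-1" using bnd[OF aT] k by (auto simp: j_def)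
  have TN: "T \<subseteq> NB k j"
  proof
    fix t assume tT: "t \<in> T"
    have "andrasfai_edge k j t"
      using pos[OF tT] bnd[OF tT] bnd[OF aT] am k j by (simp add: edge_iff j_def) arith
    then show "t \<in> NB k j" using bnd[OF tT] by (simp add: NB_def)
  qed
  have "NB k j \<subseteq> T"
  proof
    fix i assume iN: "i \<in> NB k j"
    show "i \<in> T"
    proof (rule ccontr)
      assume "i \<notin> T"
      then obtain t where tT: "t \<in> T" and e: "andrasfai_edge k i t" using mx iN by (auto simp: NB_def)
      have "andrasfai_edge k j t" "andrasfai_edge k j i" "t < 3*k-1" "i < 3*k-1"
        using TN tT iN by (auto simp: NB_def)
      then show False using edge_notri[OF j, of i t] e by blast
    qed
  qed
  then show ?thesis using TN j by blast
qed


definition rot :: "nat \<Rightarrow> nat \<Rightarrow> nat \<Rightarrow> nat" where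
  "rot k c i = (if i + c < 3*k-1 then i + c else i + c - (3*k-1))"
definition refl0 :: "nat \<Rightarrow> nat \<Rightarrow> nat" where
  "refl0 k i = (if i = 0 then 0 else 3*k-1 - i)"
definition tau :: "nat \<Rightarrow> nat \<Rightarrow> nat" where
  "tau k i = (if i \<le> k then k - i else 3*k-1 + k - i)"
definition hh :: "nat \<Rightarrow> nat \<Rightarrow> nat" where
  "hh k p = (if p \<le> k then (if p = k then 0 else p + 2*k - 1) else if p \<le> 2*k then p - (k+1) else p - (k+2))"

lemma rot_val: "k \<ge> 1 \<Longrightarrow> c < 3*k-1 \<Longrightarrow> i < 3*k-1 \<Longrightarrow> (i + c + 1 < 3*k \<and> rot k c i = i + c) \<or> (i + c + 1 \<ge> 3*k \<and> rot k c i + 3*k = i + c + 1)"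
  unfolding rot_def by auto
lemma refl0_val: "k \<ge> 1 \<Longrightarrow> i < 3*k-1 \<Longrightarrow> (i = 0 \<and> refl0 k i = 0) \<or> (i \<noteq> 0 \<and> refl0 k i + i + 1 = 3*k)"
  unfolding refl0_def by auto
lemma tau_val: "k \<ge> 1 \<Longrightarrow> i < 3*k-1 \<Longrightarrow> (i \<le> k \<and> tau k i + i = k) \<or> (k < i \<and> tau k i + i + 1 = 4*k)"
  unfolding tau_def by auto
lemma hh_val: "k \<ge> 1 \<Longrightarrow> p < 3*(k+1)-1 \<Longrightarrow> p \<notin> {0, k+1, 2*k+1} \<Longrightarrow>
   (0 < p \<and> p < k \<and> hh k p + 1 = p + 2*k) \<or> (p = k \<and> hh k p = 0) \<or> (k+1 < p \<and> p \<le> 2*k \<and> hh k p + k + 1 = p)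
   \<or> (2*k+1 < p \<and> p + 1 < 3*k + 3 \<and> hh k p + k + 2 = p)"
  unfolding hh_def by auto

lemma bnd: "(i::nat) < 3*k-1 \<Longrightarrow> i + 1 < 3*k" by arith

lemma rot_props:
  assumes k: "k \<ge> 1" and c: "c < 3*k-1"
  shows "\<And>i. i < 3*k-1 \<Longrightarrow> rot k c i < 3*k-1"
    and "inj_on (rot k c) {0..<3*k-1}"
    and "\<And>a b. a < 3*k-1 \<Longrightarrow> b < 3*k-1 \<Longrightarrow> andrasfai_edge k (rot k c a) (rot k c b) \<longleftrightarrow> andrasfai_edge k a b"
proof -
  have c1: "c + 1 < 3*k" using c by arith
  show r: "\<And>i. i < 3*k-1 \<Longrightarrow> rot k c i < 3*k-1"
  proof -
    fix i assume i: "i < 3*k-1" then have "i + 1 < 3*k" by arith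
    then show "rot k c i < 3*k-1" using c1 rot_val[OF k c i] by arith
  qed
  show "inj_on (rot k c) {0..<3*k-1}"
  proof (rule inj_onI)
    fix a b assume ab: "a \<in> {0..<3*k-1}" "b \<in> {0..<3*k-1}" "rot k c a = rot k c b"
    then have "a + 1 < 3*k" "b + 1 < 3*k" by auto
    then show "a = b" using c1 rot_val[OF k c, of a] rot_val[OF k c, of b] ab by arith
  qed
  fix a b assume ab: "a < 3*k-1" "b < 3*k-1"
  then have "a + 1 < 3*k" "b + 1 < 3*k" by arith+
  then show "andrasfai_edge k (rot k c a) (rot k c b) \<longleftrightarrow> andrasfai_edge k a b"
    unfolding edge_iff[OF r[OF ab(1)] r[OF ab(2)]] edge_iff[OF ab]
    using c1 rot_val[OF k c ab(1)] rot_val[OF k c ab(2)] by arith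
qed


lemma refl0_props:
  assumes k: "k \<ge> 1"
  shows "\<And>i. i < 3*k-1 \<Longrightarrow> refl0 k i < 3*k-1"
    and "inj_on (refl0 k) {0..<3*k-1}"
    and "\<And>a b. a < 3*k-1 \<Longrightarrow> b < 3*k-1 \<Longrightarrow> andrasfai_edge k (refl0 k a) (refl0 k b) \<longleftrightarrow> andrasfai_edge k a b"
proof -
  show r: "\<And>i. i < 3*k-1 \<Longrightarrow> refl0 k i < 3*k-1"
  proof -
    fix i assume i: "i < 3*k-1" then have "i + 1 < 3*k" by arith
    then show "refl0 k i < 3*k-1" using refl0_val[OF k i] by arith
  qed
  show "inj_on (refl0 k) {0..<3*k-1}"
  proof (rule inj_onI)
    fix a b assume ab: "a \<in> {0..<3*k-1}" "b \<in> {0..<3*k-1}" "refl0 k a = refl0 k b"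
    then have "a + 1 < 3*k" "b + 1 < 3*k" "a < 3*k-1" "b < 3*k-1" by auto
    then show "a = b" using refl0_val[OF k, of a] refl0_val[OF k, of b] ab by arith
  qed
  fix a b assume ab: "a < 3*k-1" "b < 3*k-1"
  then have "a + 1 < 3*k" "b + 1 < 3*k" by arith+
  then show "andrasfai_edge k (refl0 k a) (refl0 k b) \<longleftrightarrow> andrasfai_edge k a b"
    unfolding edge_iff[OF r[OF ab(1)] r[OF ab(2)]] edge_iff[OF ab]
    using refl0_val[OF k ab(1)] refl0_val[OF k ab(2)] by arith
qed


lemma tau_props:
  assumes k: "k \<ge> 1"
  shows "\<And>i. i < 3*k-1 \<Longrightarrow> tau k i < 3*k-1"
    and "inj_on (tau k) {0..<3*k-1}"
    and "\<And>a b. a < 3*k-1 \<Longrightarrow> b < 3*k-1 \<Longrightarrow> andrasfai_edge k (tau k a) (tau k b) \<longleftrightarrow> andrasfai_edge k a b"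
    and "\<And>i. i < 3*k-1 \<Longrightarrow> tau k (tau k i) = i"
proof -
  show r: "\<And>i. i < 3*k-1 \<Longrightarrow> tau k i < 3*k-1"
  proof -
    fix i assume i: "i < 3*k-1" then have "i + 1 < 3*k" by arith
    then show "tau k i < 3*k-1" using tau_val[OF k i] by arith
  qed
  show "inj_on (tau k) {0..<3*k-1}"
  proof (rule inj_onI)
    fix a b assume ab: "a \<in> {0..<3*k-1}" "b \<in> {0..<3*k-1}" "tau k a = tau k b"
    then have "a + 1 < 3*k" "b + 1 < 3*k" "a < 3*k-1" "b < 3*k-1" by auto
    then show "a = b" using tau_val[OF k, of a] tau_val[OF k, of b] ab by arith
  qed
  show "\<And>i. i < 3*k-1 \<Longrightarrow> tau k (tau k i) = i"
  proof -
    fix i assume i: "i < 3*k-1" then have "i + 1 < 3*k" by arith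
    then show "tau k (tau k i) = i" using tau_val[OF k i] tau_val[OF k r[OF i]] by arith
  qed
  fix a b assume ab: "a < 3*k-1" "b < 3*k-1"
  then have "a + 1 < 3*k" "b + 1 < 3*k" by arith+
  then show "andrasfai_edge k (tau k a) (tau k b) \<longleftrightarrow> andrasfai_edge k a b"
    unfolding edge_iff[OF r[OF ab(1)] r[OF ab(2)]] edge_iff[OF ab]
    using tau_val[OF k ab(1)] tau_val[OF k ab(2)] by arith
qed


lemma hh_props:
  assumes k: "k \<ge> 1"
  shows "\<And>p. p < 3*(k+1)-1 \<Longrightarrow> p \<notin> {0, k+1, 2*k+1} \<Longrightarrow> hh k p < 3*k-1"
    and "\<And>p q. p < 3*(k+1)-1 \<Longrightarrow> p \<notin> {0, k+1, 2*k+1} \<Longrightarrow> q < 3*(k+1)-1 \<Longrightarrow> q \<notin> {0, k+1, 2*k+1} \<Longrightarrow> hh k p = hh k q \<Longrightarrow> p = q"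
    and "\<And>p q. p < 3*(k+1)-1 \<Longrightarrow> p \<notin> {0, k+1, 2*k+1} \<Longrightarrow> q < 3*(k+1)-1 \<Longrightarrow> q \<notin> {0, k+1, 2*k+1} \<Longrightarrow>
       andrasfai_edge (k+1) p q \<Longrightarrow> andrasfai_edge k (hh k p) (hh k q)"
proof -
  show r: "\<And>p. p < 3*(k+1)-1 \<Longrightarrow> p \<notin> {0, k+1, 2*k+1} \<Longrightarrow> hh k p < 3*k-1"
  proof -
    fix p assume p: "p < 3*(k+1)-1" "p \<notin> {0, k+1, 2*k+1}"
    show "hh k p < 3*k-1" using hh_val[OF k p] k by arith
  qed
  show "\<And>p q. p < 3*(k+1)-1 \<Longrightarrow> p \<notin> {0, k+1, 2*k+1} \<Longrightarrow> q < 3*(k+1)-1 \<Longrightarrow> q \<notin> {0, k+1, 2*k+1} \<Longrightarrow> hh k p = hh k q \<Longrightarrow> p = q"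
  proof -
    fix p q assume p: "p < 3*(k+1)-1" "p \<notin> {0, k+1, 2*k+1}" and q: "q < 3*(k+1)-1" "q \<notin> {0, k+1, 2*k+1}" and e: "hh k p = hh k q"
    show "p = q" using hh_val[OF k p] hh_val[OF k q] e by (elim disjE conjE; linarith)
  qed
  fix p q assume p: "p < 3*(k+1)-1" "p \<notin> {0, k+1, 2*k+1}" and q: "q < 3*(k+1)-1" "q \<notin> {0, k+1, 2*k+1}"
    and e: "andrasfai_edge (k+1) p q"
  have e': "(k + 1 + q \<le> p \<and> p < 2*k + 2 + q) \<or> (k + 1 + p \<le> q \<and> q < 2*k + 2 + p)"
    using e unfolding edge_iff[OF p(1) q(1)] by (simp add: algebra_simps)
  have hp: "hh k p < 3*k-1" "hh k q < 3*k-1" using r p q by auto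
  show "andrasfai_edge k (hh k p) (hh k q)"
    unfolding edge_iff[OF hp]
    using e' hh_val[OF k p] hh_val[OF k q] k
    apply (cases "hh k q \<le> hh k p")
     apply (rule disjI1)
     apply (elim disjE conjE; intro conjI; linarith)
    apply (rule disjI2)
    apply (elim disjE conjE; intro conjI; linarith)
    done
qed





locale GG =
  fixes V :: "'a set" and E :: "'a \<Rightarrow> 'a \<Rightarrow> bool" and k :: nat
  assumes k1: "k \<ge> 1" and cA: "classA V E" and noG: "\<not> contains_andrasfai (k+1) V E"
begin

lemma Esym: "E x y \<Longrightarrow> E y x" using cA unfolding classA_def simple_graph_def by blast
lemma Eirr: "\<not> E x x" using cA unfolding classA_def simple_graph_def by blast
lemma EV: "E x y \<Longrightarrow> x \<in> V" "E x y \<Longrightarrow> y \<in> V" using cA unfolding classA_def simple_graph_def by blast+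
lemma tri: "E x y \<Longrightarrow> E y z \<Longrightarrow> E x z \<Longrightarrow> False"
proof -
  assume a: "E x y" "E y z" "E x z"
  have "x \<in> V" "y \<in> V" "z \<in> V" using EV a by auto
  moreover have "triangle_free V E" using cA unfolding classA_def maximal_triangle_free_def by simp
  ultimately show False using a unfolding triangle_free_def by blast
qed
lemma maxl: "x \<in> V \<Longrightarrow> y \<in> V \<Longrightarrow> x \<noteq> y \<Longrightarrow> \<not> E x y \<Longrightarrow> \<exists>z\<in>V. E x z \<and> E y z"
  using cA unfolding classA_def maximal_triangle_free_def by blast
lemma noC6: "\<not> has_induced_C6 V E" using cA unfolding classA_def by blast

abbreviation emb where "emb f \<equiv> andrasfai_subgraph_emb k V E f"
abbreviation VS where "VS \<equiv> {0..<3*k-1}"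

definition TT :: "(nat \<Rightarrow> 'a) \<Rightarrow> 'a \<Rightarrow> nat set" where
  "TT f x = {i. i < 3*k-1 \<and> E x (f i)}"

definition PP :: "(nat \<Rightarrow> 'a) \<Rightarrow> 'a \<Rightarrow> bool" where
  "PP f x \<longleftrightarrow> (\<exists>j<3*k-1. TT f x = NB k j)"

lemma verts: "andrasfai_verts k = {0..<3*k-1}" by (simp add: andrasfai_verts_def)

lemma emb_edge: "emb f \<Longrightarrow> i < 3*k-1 \<Longrightarrow> j < 3*k-1 \<Longrightarrow> andrasfai_edge k i j \<Longrightarrow> E (f i) (f j)"
  unfolding andrasfai_subgraph_emb_def verts by auto
lemma emb_V: "emb f \<Longrightarrow> i < 3*k-1 \<Longrightarrow> f i \<in> V"
  unfolding andrasfai_subgraph_emb_def verts by auto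
lemma emb_inj: "emb f \<Longrightarrow> i < 3*k-1 \<Longrightarrow> j < 3*k-1 \<Longrightarrow> f i = f j \<Longrightarrow> i = j"
  unfolding andrasfai_subgraph_emb_def verts inj_on_def by auto

lemma induced: assumes "emb f" "i < 3*k-1" "j < 3*k-1"
  shows "E (f i) (f j) \<longleftrightarrow> andrasfai_edge k i j"
proof
  assume e: "E (f i) (f j)"
  show "andrasfai_edge k i j"
  proof (rule ccontr)
    assume ne: "\<not> andrasfai_edge k i j"
    have "i \<noteq> j" using e Eirr by auto
    then obtain m where m: "m < 3*k-1" "andrasfai_edge k i m" "andrasfai_edge k j m"
      using common_nbr[OF k1 assms(2,3) _ ne] by blast
    show False using tri[OF e emb_edge[OF assms(1) assms(3) m(1) m(3)] emb_edge[OF assms(1) assms(2) m(1) m(2)]] .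
  qed
qed (rule emb_edge[OF assms])

lemma TT_sub: "TT f x \<subseteq> {0..<3*k-1}" unfolding TT_def by auto
lemma TT_fin: "finite (TT f x)" using TT_sub finite_subset by blast
lemma TT_card: "card (TT f x) \<le> 3*k-1" using card_mono[OF _ TT_sub] by simp

lemma TT_indep: "emb f \<Longrightarrow> a \<in> TT f x \<Longrightarrow> b \<in> TT f x \<Longrightarrow> \<not> andrasfai_edge k a b"
proof
  assume f: "emb f" and a: "a \<in> TT f x" and b: "b \<in> TT f x" and e: "andrasfai_edge k a b"
  have "E x (f a)" "E x (f b)" "a < 3*k-1" "b < 3*k-1" using a b unfolding TT_def by auto
  then show False using tri[of x "f a" "f b"] emb_edge[OF f _ _ e] by blast
qed

lemma comp_emb:
  assumes f: "emb f"
    and r: "\<And>i. i < 3*k-1 \<Longrightarrow> \<sigma> i < 3*k-1"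
    and inj: "inj_on \<sigma> {0..<3*k-1}"
    and ed: "\<And>a b. a < 3*k-1 \<Longrightarrow> b < 3*k-1 \<Longrightarrow> andrasfai_edge k (\<sigma> a) (\<sigma> b) \<longleftrightarrow> andrasfai_edge k a b"
  shows "emb (f \<circ> \<sigma>)" and "(f \<circ> \<sigma>) ` {0..<3*k-1} = f ` {0..<3*k-1}"
    and "TT (f \<circ> \<sigma>) x = {i. i < 3*k-1 \<and> \<sigma> i \<in> TT f x}"
    and "card (TT (f \<circ> \<sigma>) x) = card (TT f x)"
proof -
  have im: "\<sigma> ` {0..<3*k-1} = {0..<3*k-1}"
    by (rule endo_inj_surj) (use r inj in auto)
  show imf: "(f \<circ> \<sigma>) ` {0..<3*k-1} = f ` {0..<3*k-1}" using im by (metis image_comp)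
  show "emb (f \<circ> \<sigma>)"
    unfolding andrasfai_subgraph_emb_def verts
  proof (intro conjI ballI impI)
    show "inj_on (f \<circ> \<sigma>) {0..<3*k-1}"
      using f inj im unfolding andrasfai_subgraph_emb_def verts by (metis comp_inj_on)
    show "(f \<circ> \<sigma>) ` {0..<3*k-1} \<subseteq> V" using f imf unfolding andrasfai_subgraph_emb_def verts
      by simp
    fix i j assume "i \<in> {0..<3*k-1}" "j \<in> {0..<3*k-1}" "andrasfai_edge k i j"
    then show "E ((f \<circ> \<sigma>) i) ((f \<circ> \<sigma>) j)" using emb_edge[OF f] r ed by auto
  qed
  show T: "TT (f \<circ> \<sigma>) x = {i. i < 3*k-1 \<and> \<sigma> i \<in> TT f x}" unfolding TT_def using r by auto
  have "\<sigma> ` TT (f \<circ> \<sigma>) x = TT f x"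
  proof
    show "\<sigma> ` TT (f \<circ> \<sigma>) x \<subseteq> TT f x" using T by auto
    show "TT f x \<subseteq> \<sigma> ` TT (f \<circ> \<sigma>) x"
    proof
      fix t assume t: "t \<in> TT f x"
      then have "t \<in> \<sigma> ` {0..<3*k-1}" using im TT_sub[of f x] by auto
      then obtain i where "i < 3*k-1" "\<sigma> i = t" by auto
      then show "t \<in> \<sigma> ` TT (f \<circ> \<sigma>) x" using T t by auto
    qed
  qed
  moreover have "inj_on \<sigma> (TT (f \<circ> \<sigma>) x)" using inj TT_sub inj_on_subset by blast
  ultimately show "card (TT (f \<circ> \<sigma>) x) = card (TT f x)" using card_image by metis
qed

lemma swap_emb:
  assumes f: "emb f" and j: "j < 3*k-1" and w: "w \<in> V" "w \<notin> f ` {0..<3*k-1}" and T: "TT f w = NB k j"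
  shows "emb (f(j := w))" and "(f(j:=w)) ` {0..<3*k-1} = insert w (f ` ({0..<3*k-1} - {j}))"
proof -
  show "(f(j:=w)) ` {0..<3*k-1} = insert w (f ` ({0..<3*k-1} - {j}))" using j by auto
  have wE: "\<And>i. i < 3*k-1 \<Longrightarrow> E w (f i) \<longleftrightarrow> andrasfai_edge k j i"
    using T unfolding TT_def NB_def by auto
  show "emb (f(j := w))"
    unfolding andrasfai_subgraph_emb_def verts
  proof (intro conjI ballI impI)
    show "inj_on (f(j := w)) {0..<3*k-1}"
      using f w unfolding andrasfai_subgraph_emb_def verts inj_on_def by auto
    show "(f(j := w)) ` {0..<3*k-1} \<subseteq> V" using f w unfolding andrasfai_subgraph_emb_def verts by auto
    fix a b assume ab: "a \<in> {0..<3*k-1}" "b \<in> {0..<3*k-1}" "andrasfai_edge k a b"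
    show "E ((f(j := w)) a) ((f(j := w)) b)"
    proof (cases "a = j"; cases "b = j")
      assume "a = j" "b = j" then show ?thesis using ab edge_irr[OF k1] by auto
    next
      assume "a = j" "b \<noteq> j" then show ?thesis using ab wE by auto
    next
      assume "a \<noteq> j" "b = j" then show ?thesis using ab wE edge_sym Esym by auto
    next
      assume "a \<noteq> j" "b \<noteq> j" then show ?thesis using ab emb_edge[OF f] by auto
    qed
  qed
qed

end



lemma edge_up: assumes "i < 3*k-1" "j < 3*k-1" "k + i \<le> j" "j < 2*k + i" shows "andrasfai_edge k i j"
  unfolding edge_iff[OF assms(1,2)] using assms(3,4) by blast
lemma edge_dn: assumes "i < 3*k-1" "j < 3*k-1" "k + j \<le> i" "i < 2*k + j" shows "andrasfai_edge k i j"
  unfolding edge_iff[OF assms(1,2)] using assms(3,4) by blast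
lemma nedge1: assumes "i < 3*k-1" "j < 3*k-1" "i < k + j" "j < k + i" shows "\<not> andrasfai_edge k i j"
  unfolding edge_iff[OF assms(1,2)] using assms(3,4) by (intro notI; elim disjE conjE; linarith)
lemma nedge2: assumes "i < 3*k-1" "j < 3*k-1" "2*k + j \<le> i" shows "\<not> andrasfai_edge k i j"
  unfolding edge_iff[OF assms(1,2)] using assms(1,2,3) by (intro notI; elim disjE conjE; linarith)
lemma nedge3: assumes "i < 3*k-1" "j < 3*k-1" "2*k + i \<le> j" shows "\<not> andrasfai_edge k i j"
  unfolding edge_iff[OF assms(1,2)] using assms(1,2,3) by (intro notI; elim disjE conjE; linarith)

lemma all6: "(\<forall>i<(6::nat). P i) \<longleftrightarrow> P 0 \<and> P 1 \<and> P 2 \<and> P 3 \<and> P 4 \<and> P 5"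
proof -
  have "{..<(6::nat)} = {0,1,2,3,4,5}" by auto
  then show ?thesis by (auto simp: lessThan_iff[symmetric])
qed

context GG begin

lemma C6:
  assumes f: "emb h" and xV: "x \<in> V" and wV: "w \<in> V"
    and xn: "x \<notin> h ` {0..<3*k-1}" and wn: "w \<notin> h ` {0..<3*k-1}"
    and xw: "E x w" and w0: "E w (h 0)" and nx0: "\<not> E x (h 0)" and nxp: "\<not> E x (h p)" and xt: "E x (h t)"
    and tpq: "t < 3*k-1" "p < 3*k-1" "q < 3*k-1"
    and e0p: "andrasfai_edge k 0 p" and ntp: "\<not> andrasfai_edge k t p" and epq: "andrasfai_edge k p q"
    and etq: "andrasfai_edge k t q" and n0q: "\<not> andrasfai_edge k 0 q" and n0t: "\<not> andrasfai_edge k 0 t"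
  shows "E w (h q)"
proof (rule ccontr)
  assume nwq: "\<not> E w (h q)"
  have z: "0 < 3*k-1" using k1 by simp
  have E1: "E (h 0) (h p)" using emb_edge[OF f z tpq(2) e0p] .
  have E2: "E (h p) (h q)" using emb_edge[OF f tpq(2) tpq(3) epq] .
  have E3: "E (h q) (h t)" using emb_edge[OF f tpq(3) tpq(1)] etq edge_sym tpq by blast
  have N1: "\<not> E x (h q)" using tri[of x "h q" "h t"] E3 xt by blast
  have N2: "\<not> E w (h p)" using tri[of w "h 0" "h p"] w0 E1 by blast
  have N3: "\<not> E w (h t)" using tri[of w x "h t"] Esym[OF xw] xt by blast
  have N4: "\<not> E (h 0) (h q)" using induced[OF f z tpq(3)] n0q by blast
  have N5: "\<not> E (h 0) (h t)" using induced[OF f z tpq(1)] n0t by blast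
  have N6: "\<not> E (h p) (h t)" using induced[OF f tpq(2) tpq(1)] ntp edge_sym tpq by blast
  have hV: "h 0 \<in> V" "h p \<in> V" "h q \<in> V" "h t \<in> V" using emb_V[OF f] z tpq by auto
  have D1: "x \<noteq> w" "x \<noteq> h 0" "x \<noteq> h p" "x \<noteq> h q" "x \<noteq> h t"
    using xw Eirr xn z tpq by auto
  have D2: "w \<noteq> h 0" "w \<noteq> h p" "w \<noteq> h q" "w \<noteq> h t"
    using wn z tpq by auto
  have D3: "h 0 \<noteq> h p" "h 0 \<noteq> h q" "h 0 \<noteq> h t" "h p \<noteq> h q" "h p \<noteq> h t" "h q \<noteq> h t"
    using E1 E2 E3 Eirr w0 nwq xt nx0 nxp by (metis, metis, metis, metis, metis, metis)
  note D = D1 D2 D3 D1[symmetric] D2[symmetric] D3[symmetric]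
  note EE = xw w0 E1 E2 E3 xt
  note NN = nx0 nxp N1 N2 N3 N4 N5 N6 nwq
  have ES: "E w x" "E (h 0) w" "E (h p) (h 0)" "E (h q) (h p)" "E (h t) (h q)" "E (h t) x"
    using EE Esym by blast+
  have NS: "\<not> E (h 0) x" "\<not> E (h p) x" "\<not> E (h q) x" "\<not> E (h p) w" "\<not> E (h t) w" "\<not> E (h q) (h 0)"
     "\<not> E (h t) (h 0)" "\<not> E (h t) (h p)" "\<not> E (h q) w"
    using NN Esym by blast+
  have "has_induced_C6 V E"
    unfolding has_induced_C6_def
  proof (intro exI[of _ "\<lambda>i. [x, w, h 0, h p, h q, h t] ! i"] conjI)
    show "inj_on (\<lambda>i. [x, w, h 0, h p, h q, h t] ! i) {0..<6}"
    proof -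
      have "\<forall>i<(6::nat). \<forall>j<(6::nat). [x, w, h 0, h p, h q, h t] ! i = [x, w, h 0, h p, h q, h t] ! j \<longrightarrow> i = j"
        using D by (simp only: all6) simp
      then show ?thesis unfolding inj_on_def by auto
    qed
    show "(\<lambda>i. [x, w, h 0, h p, h q, h t] ! i) ` {0..<6} \<subseteq> V"
    proof -
      have "\<forall>i<(6::nat). [x, w, h 0, h p, h q, h t] ! i \<in> V" using xV wV hV by (simp only: all6) simp
      then show ?thesis by auto
    qed
    show "\<forall>i<6. \<forall>j<6. E ([x, w, h 0, h p, h q, h t] ! i) ([x, w, h 0, h p, h q, h t] ! j) \<longleftrightarrow> (i + 6 - j) mod 6 \<in> {1, 5}"
      using EE NN ES NS Eirr by (simp only: all6) simp
  qed
  then show False using noC6 by blast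
qed

end


context GG begin

lemma side:
  assumes g: "emb g" and xV: "x \<in> V" and xn: "x \<notin> g ` {0..<3*k-1}" and n0: "\<not> E x (g 0)"
    and bad: "\<And>p. p < 3*k-1 \<Longrightarrow> andrasfai_edge k 0 p \<Longrightarrow> \<not> E x (g p)"
  shows "TT g x \<subseteq> {1..<k} \<or> TT g x \<subseteq> {2*k..<3*k-1}"
proof -
  have z: "0 < 3*k-1" using k1 by simp
  have "x \<noteq> g 0" using xn z by auto
  obtain w where wV: "w \<in> V" and xw: "E x w" and gw: "E (g 0) w"
    using maxl[OF xV emb_V[OF g z] \<open>x \<noteq> g 0\<close> n0] by blast
  have wn: "w \<notin> g ` {0..<3*k-1}"
  proof
    assume "w \<in> g ` {0..<3*k-1}" then obtain j where j: "j < 3*k-1" "w = g j" by auto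
    have "andrasfai_edge k 0 j" using induced[OF g z j(1)] gw j(2) by simp
    then show False using bad[OF j(1)] xw j(2) by simp
  qed
  have loc: "\<And>t. t \<in> TT g x \<Longrightarrow> (1 \<le> t \<and> t < k) \<or> (2*k \<le> t \<and> t < 3*k-1)"
  proof -
    fix t assume "t \<in> TT g x"
    then have t: "t < 3*k-1" "E x (g t)" unfolding TT_def by auto
    have "t \<noteq> 0" proof assume "t = 0" then show False using t n0 by simp qed
    have "\<not> andrasfai_edge k 0 t" using bad t by blast
    then have "\<not> (k \<le> t \<and> t < 2*k)" using edge_up[OF z t(1)] by auto
    then show "(1 \<le> t \<and> t < k) \<or> (2*k \<le> t \<and> t < 3*k-1)" using \<open>t \<noteq> 0\<close> t(1) by auto
  qed
  show ?thesis
  proof (rule ccontr)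
    assume "\<not> ?thesis"
    then obtain t1 t2 where t1: "t1 \<in> TT g x" "t1 \<notin> {1..<k}" and t2: "t2 \<in> TT g x" "t2 \<notin> {2*k..<3*k-1}" by blast
    from loc[OF t1(1)] t1(2) have a1: "2*k \<le> t1" "t1 < 3*k-1" by auto
    from loc[OF t2(1)] t2(2) have a2: "1 \<le> t2" "t2 < k" by auto
    obtain a where a: "k = a + 2" using a2 by (metis add.commute le_Suc_ex less_imp_le_nat Suc_le_eq one_add_one plus_1_eq_Suc add_Suc_right)
    have x1: "E x (g t1)" "E x (g t2)" using t1 t2 unfolding TT_def by auto
    have b: "k < 3*k-1" "2*k < 3*k-1" "2*k-1 < 3*k-1" "k-1 < 3*k-1" "t2 < 3*k-1" using a a1 a2 by auto
    have e1: "andrasfai_edge k 0 k" by (rule edge_up) (use z b in auto)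
    have e2: "\<not> andrasfai_edge k t2 k" by (rule nedge1) (use b a2 in auto)
    have e3: "andrasfai_edge k k (2*k)" by (rule edge_up) (use b a in auto)
    have e4: "andrasfai_edge k t2 (2*k)" by (rule edge_up) (use b a2 in auto)
    have e5: "\<not> andrasfai_edge k 0 (2*k)" by (rule nedge3) (use b z in auto)
    have e6: "\<not> andrasfai_edge k 0 t2" by (rule nedge1) (use b a2 z in auto)
    have W1: "E w (g (2*k))"
      using C6[where h=g and x=x and w=w and t=t2 and p=k and q="2*k",
        OF g xV wV xn wn xw Esym[OF gw] n0 bad[OF b(1) e1] x1(2) b(5) b(1) b(2) e1 e2 e3 e4 e5 e6] .
    have f1: "andrasfai_edge k 0 (2*k-1)" by (rule edge_up) (use z b a in auto)
    have f2: "\<not> andrasfai_edge k t1 (2*k-1)" by (rule nedge1) (use b a a1 in auto)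
    have f3: "andrasfai_edge k (2*k-1) (k-1)" by (rule edge_dn) (use b a in auto)
    have f4: "andrasfai_edge k t1 (k-1)" by (rule edge_dn) (use b a a1 in auto)
    have f5: "\<not> andrasfai_edge k 0 (k-1)" by (rule nedge1) (use b a z in auto)
    have f6: "\<not> andrasfai_edge k 0 t1" by (rule nedge3) (use b a1 z in auto)
    have W2: "E w (g (k-1))"
      using C6[where h=g and x=x and w=w and t=t1 and p="2*k-1" and q="k-1",
        OF g xV wV xn wn xw Esym[OF gw] n0 bad[OF b(3) f1] x1(1) a1(2) b(3) b(4) f1 f2 f3 f4 f5 f6] .
    have "andrasfai_edge k (k-1) (2*k)" by (rule edge_up) (use b a in auto)
    then have "E (g (k-1)) (g (2*k))" using emb_edge[OF g b(4) b(2)] by blast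
    then show False using tri[OF W2 _ W1] by blast
  qed
qed

end



lemma NB_two:
  assumes k: "k \<ge> 2" and j: "j < 3*k-1"
  shows "\<exists>a b. a \<noteq> b \<and> a \<in> NB k j \<and> b \<in> NB k j"
proof -
  have j1: "j + 1 < 3*k" using j by arith
  show ?thesis
  proof (cases "j + k + 1 < 3*k-1")
    case True
    have "andrasfai_edge k j (j+k)" by (rule edge_up) (use True j k in auto)
    moreover have "andrasfai_edge k j (j+k+1)" by (rule edge_up) (use True j k in auto)
    ultimately show ?thesis using True unfolding NB_def
      by (intro exI[of _ "j+k"] exI[of _ "j+k+1"]) auto
  next
    case F: False
    show ?thesis
    proof (cases "k + 1 \<le> j")
      case True
      have "andrasfai_edge k j (j-k)" by (rule edge_dn) (use True j k in auto)
      moreover have "andrasfai_edge k j (j-k-1)" by (rule edge_dn) (use True j k in auto)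
      ultimately show ?thesis using True j unfolding NB_def
        by (intro exI[of _ "j-k"] exI[of _ "j-k-1"]) auto
    next
      case False
      have jk: "j = k" using F False k j1 by linarith
      have "andrasfai_edge k j (j-k)" by (rule edge_dn) (use jk j k in auto)
      moreover have "andrasfai_edge k j (j+k)" by (rule edge_up) (use jk j k in auto)
      ultimately show ?thesis using jk j k unfolding NB_def
        by (intro exI[of _ "j-k"] exI[of _ "j+k"]) auto
    qed
  qed
qed

context GG begin

definition IHc :: "nat \<Rightarrow> bool" where
  "IHc c \<longleftrightarrow> (\<forall>h' y. emb h' \<longrightarrow> y \<in> V \<longrightarrow> y \<notin> h' ` {0..<3*k-1} \<longrightarrow> c < card (TT h' y) \<longrightarrow> PP h' y)"

lemma TT_mem: "i \<in> TT f x \<longleftrightarrow> i < 3*k-1 \<and> E x (f i)" unfolding TT_def by simp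

lemma claimW:
  assumes h: "emb h" and xV: "x \<in> V" and xn: "x \<notin> h ` {0..<3*k-1}" and sub: "TT h x \<subseteq> {1..<k}"
    and IH: "IHc (card (TT h x))"
  shows "\<exists>w\<in>V. w \<notin> h ` {0..<3*k-1} \<and> E x w \<and> TT h w = NB k k"
proof -
  have z: "0 < 3*k-1" using k1 by simp
  have kn: "k < 3*k-1" using k1 by simp
  have "x \<noteq> h 0" using xn z by auto
  have n0: "\<not> E x (h 0)"
  proof
    assume "E x (h 0)" then have "0 \<in> TT h x" using z by (simp add: TT_mem)
    then show False using sub by auto
  qed
  obtain w where wV: "w \<in> V" and xw: "E x w" and hw: "E (h 0) w"
    using maxl[OF xV emb_V[OF h z] \<open>x \<noteq> h 0\<close> n0] by blast
  have wn: "w \<notin> h ` {0..<3*k-1}"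
  proof
    assume "w \<in> h ` {0..<3*k-1}" then obtain j where j: "j < 3*k-1" "w = h j" by auto
    have "j \<in> TT h x" using xw j by (auto simp: TT_mem)
    then have jj: "1 \<le> j" "j < k" using sub by auto
    have "andrasfai_edge k 0 j" using induced[OF h z j(1)] hw j(2) by simp
    moreover have "\<not> andrasfai_edge k 0 j" by (rule nedge1) (use z j jj in auto)
    ultimately show False by simp
  qed
  have w0: "0 \<in> TT h w" using Esym[OF hw] z by (auto simp: TT_mem)
  have "TT h w = NB k k"
  proof (cases "k = 1")
    case True
    have "\<And>i. i < 3*k-1 \<Longrightarrow> i \<in> TT h w \<longleftrightarrow> andrasfai_edge k k i"
    proof -
      fix i assume i: "i < 3*k-1"
      then have "i = 0 \<or> i = 1" using True by auto
      moreover have "andrasfai_edge k k 0" by (rule edge_dn) (use True in auto)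
      moreover have "\<not> andrasfai_edge k k 1" using edge_irr[of k 1] True by simp
      moreover have "1 \<notin> TT h w"
      proof
        assume "1 \<in> TT h w"
        then have "E w (h 1)" by (simp add: TT_mem)
        moreover have "andrasfai_edge k 0 1" by (rule edge_up) (use True in auto)
        then have "E (h 0) (h 1)" using emb_edge[OF h] True by auto
        ultimately show False using tri[OF Esym[OF hw]] by blast
      qed
      ultimately show "i \<in> TT h w \<longleftrightarrow> andrasfai_edge k k i" using w0 True by auto
    qed
    then show ?thesis unfolding NB_def using TT_sub[of h w] by auto
  next
    case k2: False
    then have k2: "k \<ge> 2" using k1 by simp
    show ?thesis
    proof (cases "TT h x = {}")
      case True
      have "card (TT h x) < card (TT h w)" using True w0 TT_fin[of h w] by (auto simp: card_gt_0_iff)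
      then have "PP h w" using IH wV wn h unfolding IHc_def by blast
      then obtain j where j: "j < 3*k-1" "TT h w = NB k j" unfolding PP_def by blast
      define h' where "h' = h(j := w)"
      have h': "emb h'" using swap_emb(1)[OF h j(1) wV wn j(2)] by (simp add: h'_def)
      have im: "h' ` {0..<3*k-1} = insert w (h ` ({0..<3*k-1} - {j}))"
        using swap_emb(2)[OF h j(1) wV wn j(2)] by (simp add: h'_def)
      have "x \<noteq> w" using xw Eirr by auto
      then have xn': "x \<notin> h' ` {0..<3*k-1}" using im xn by auto
      have T': "TT h' x = {j}"
      proof
        show "TT h' x \<subseteq> {j}"
        proof
          fix i assume "i \<in> TT h' x"
          then have "i < 3*k-1" "E x (h' i)" by (auto simp: TT_mem)
          then show "i \<in> {j}" using True by (cases "i = j") (auto simp: h'_def TT_mem)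
        qed
        show "{j} \<subseteq> TT h' x" using j xw by (auto simp: TT_mem h'_def)
      qed
      have "card (TT h x) < card (TT h' y)" if "y = x" for y using True T' that by simp
      then have "PP h' x" using IH h' xV xn' unfolding IHc_def by blast
      then obtain j' where j': "j' < 3*k-1" "{j} = NB k j'" using T' unfolding PP_def by auto
      then obtain a b where "a \<noteq> b" "a \<in> NB k j'" "b \<in> NB k j'" using NB_two[OF k2 j'(1)] by blast
      then have False using j'(2) by (metis singletonD)
      then show ?thesis ..
    next
      case False
      define b where "b = Max (TT h x)"
      have bT: "b \<in> TT h x" unfolding b_def using False TT_fin by (intro Max_in) auto
      have Tb: "\<And>t. t \<in> TT h x \<Longrightarrow> t \<le> b" unfolding b_def using TT_fin by simp
      have b1: "1 \<le> b" "b < k" using bT sub by auto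
      have xb: "E x (h b)" using bT by (simp add: TT_mem)
      have bn: "b < 3*k-1" using b1 by arith
      have nxk: "\<not> E x (h k)"
      proof
        assume "E x (h k)" then have "k \<in> TT h x" using kn by (simp add: TT_mem)
        then show False using sub by auto
      qed
      have e1: "andrasfai_edge k 0 k" by (rule edge_up) (use z kn in auto)
      have e2: "\<not> andrasfai_edge k b k" by (rule nedge1) (use bn kn b1 in auto)
      have Q: "\<And>q. 2*k \<le> q \<Longrightarrow> q < 2*k + b \<Longrightarrow> E w (h q)"
      proof -
        fix q assume q: "2*k \<le> q" "q < 2*k + b"
        have qn: "q < 3*k-1" using q b1 by arith
        have e3: "andrasfai_edge k k q" by (rule edge_up) (use qn kn q b1 in auto)
        have e4: "andrasfai_edge k b q" by (rule edge_up) (use qn bn q b1 in auto)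
        have e5: "\<not> andrasfai_edge k 0 q" by (rule nedge3) (use qn z q in auto)
        have e6: "\<not> andrasfai_edge k 0 b" by (rule nedge1) (use bn z b1 in auto)
        show "E w (h q)"
          using C6[where h=h and x=x and w=w and t=b and p=k and q=q,
            OF h xV wV xn wn xw Esym[OF hw] n0 nxk xb bn kn qn e1 e2 e3 e4 e5 e6] .
      qed
      have sup: "insert 0 {2*k..<2*k+b} \<subseteq> TT h w"
      proof
        fix i assume "i \<in> insert 0 {2*k..<2*k+b}"
        then show "i \<in> TT h w"
        proof
          assume "i = 0" then show ?thesis using w0 by simp
        next
          assume i: "i \<in> {2*k..<2*k+b}"
          then have "i < 3*k-1" using b1 by auto
          then show ?thesis using Q i by (auto simp: TT_mem)
        qed
      qed
      have "card (insert 0 {2*k..<2*k+b}) = b + 1" using k1 by simp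
      then have c1: "b + 1 \<le> card (TT h w)" using card_mono[OF TT_fin sup] by simp
      have "TT h x \<subseteq> {1..<b+1}" using sub Tb by fastforce
      then have "card (TT h x) \<le> b" using card_mono[of "{1..<b+1}" "TT h x"] by simp
      then have "card (TT h x) < card (TT h w)" using c1 by simp
      then have "PP h w" using IH wV wn h unfolding IHc_def by blast
      then obtain j where j: "j < 3*k-1" "TT h w = NB k j" unfolding PP_def by blast
      have "0 \<in> NB k j" "2*k \<in> NB k j" using j(2) sup b1 by auto
      then have "andrasfai_edge k j 0" "andrasfai_edge k j (2*k)" "2*k < 3*k-1" unfolding NB_def by auto
      then have "j = k" unfolding edge_iff[OF j(1) z] edge_iff[OF j(1) \<open>2*k < 3*k-1\<close>]
        by (elim disjE conjE; linarith)
      then show ?thesis using j by simp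
    qed
  qed
  then show ?thesis using wV wn xw by blast
qed

end



lemma edge_iff1:
  assumes "p < 3*k+2" "q < 3*k+2"
  shows "andrasfai_edge (k+1) p q \<longleftrightarrow> (k + 1 + q \<le> p \<and> p < 2*k + 2 + q) \<or> (k + 1 + p \<le> q \<and> q < 2*k + 2 + p)"
proof -
  have a: "p < 3*(k+1)-1" "q < 3*(k+1)-1" using assms by auto
  show ?thesis unfolding edge_iff[OF a] by (simp add: algebra_simps)
qed

context GG begin

lemma bigG:
  assumes h: "emb h" and xV: "x \<in> V" and wV: "w \<in> V" and w'V: "w' \<in> V"
    and xn: "x \<notin> h ` {0..<3*k-1}" and wn: "w \<notin> h ` {0..<3*k-1}" and w'n: "w' \<notin> h ` {0..<3*k-1}"
    and xw: "E x w" and xw': "E x w'" and Tx: "TT h x = {1..<k}" and Tw: "TT h w = NB k k" and Tw': "TT h w' = NB k 0"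
  shows False
proof -
  have z: "0 < 3*k-1" using k1 by simp
  have kn: "k < 3*k-1" using k1 by simp
  have Ex: "\<And>i. i < 3*k-1 \<Longrightarrow> E x (h i) \<longleftrightarrow> 1 \<le> i \<and> i < k"
    using Tx unfolding TT_def by (auto simp: set_eq_iff)
  have Ew: "\<And>i. i < 3*k-1 \<Longrightarrow> E w (h i) \<longleftrightarrow> andrasfai_edge k k i"
    using Tw unfolding TT_def NB_def by (auto simp: set_eq_iff)
  have Ew': "\<And>i. i < 3*k-1 \<Longrightarrow> E w' (h i) \<longleftrightarrow> andrasfai_edge k 0 i"
    using Tw' unfolding TT_def NB_def by (auto simp: set_eq_iff)
  have "andrasfai_edge k k 0" by (rule edge_dn) (use kn z in auto)
  then have "E w (h 0)" using Ew z by simp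
  moreover have "\<not> E w' (h 0)" using Ew' z edge_irr[OF k1 z] by simp
  ultimately have ww: "w \<noteq> w'" by auto
  have xw1: "x \<noteq> w" "x \<noteq> w'" using xw xw' Eirr by auto
  define g where "g p = (if p = 0 then x else if p = k+1 then w' else if p = 2*k+1 then w else h (hh k p))" for p
  have g0: "g 0 = x" and g1: "g (k+1) = w'" and g2: "g (2*k+1) = w" using k1 by (auto simp: g_def)
  have gh: "\<And>p. p \<notin> {0, k+1, 2*k+1} \<Longrightarrow> g p = h (hh k p)" by (auto simp: g_def)
  have mm: "3*(k+1)-1 = 3*k+2" by simp
  have hhn: "\<And>p. p < 3*k+2 \<Longrightarrow> p \<notin> {0, k+1, 2*k+1} \<Longrightarrow> hh k p < 3*k-1" using hh_props(1)[OF k1] mm by auto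
  have hhv: "\<And>p. p < 3*k+2 \<Longrightarrow> p \<notin> {0, k+1, 2*k+1} \<Longrightarrow>
   (0 < p \<and> p < k \<and> hh k p + 1 = p + 2*k) \<or> (p = k \<and> hh k p = 0) \<or> (k+1 < p \<and> p \<le> 2*k \<and> hh k p + k + 1 = p)
   \<or> (2*k+1 < p \<and> p + 1 < 3*k + 3 \<and> hh k p + k + 2 = p)" using hh_val[OF k1] mm by auto
  have S0: "\<And>q. q < 3*k+2 \<Longrightarrow> andrasfai_edge (k+1) 0 q \<Longrightarrow> E x (g q)"
  proof -
    fix q assume q: "q < 3*k+2" "andrasfai_edge (k+1) 0 q"
    have z2: "0 < 3*k+2" by simp
    have qq: "k + 1 \<le> q" "q < 2*k+2" using q(2) unfolding edge_iff1[OF z2 q(1)] by auto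
    show "E x (g q)"
    proof (cases "q \<in> {0, k+1, 2*k+1}")
      case True then show ?thesis using qq xw xw' g1 g2 by auto
    next
      case False
      have "1 \<le> hh k q \<and> hh k q < k" using hhv[OF q(1) False] qq False by auto
      then show ?thesis using gh[OF False] Ex hhn[OF q(1) False] by auto
    qed
  qed
  have S1: "\<And>q. q < 3*k+2 \<Longrightarrow> andrasfai_edge (k+1) (k+1) q \<Longrightarrow> E w' (g q)"
  proof -
    fix q assume q: "q < 3*k+2" "andrasfai_edge (k+1) (k+1) q"
    have z2: "k+1 < 3*k+2" by simp
    have qq: "q = 0 \<or> 2*k+2 \<le> q" using q(2) unfolding edge_iff1[OF z2 q(1)] by auto
    show "E w' (g q)"
    proof (cases "q \<in> {0, k+1, 2*k+1}")
      case True then show ?thesis using qq g0 Esym[OF xw'] by auto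
    next
      case False
      have hq: "hh k q < 3*k-1" using hhn[OF q(1) False] .
      have "k \<le> hh k q \<and> hh k q < 2*k" using hhv[OF q(1) False] qq False by auto
      then have "andrasfai_edge k 0 (hh k q)" using edge_up[OF z hq] by auto
      then show ?thesis using gh[OF False] Ew' hq by auto
    qed
  qed
  have S2: "\<And>q. q < 3*k+2 \<Longrightarrow> andrasfai_edge (k+1) (2*k+1) q \<Longrightarrow> E w (g q)"
  proof -
    fix q assume q: "q < 3*k+2" "andrasfai_edge (k+1) (2*k+1) q"
    have z2: "2*k+1 < 3*k+2" by simp
    have qq: "q \<le> k" using q(1) q(2) unfolding edge_iff1[OF z2 q(1)] by auto
    show "E w (g q)"
    proof (cases "q \<in> {0, k+1, 2*k+1}")
      case True then show ?thesis using qq g0 Esym[OF xw] by auto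
    next
      case False
      have hq: "hh k q < 3*k-1" using hhn[OF q(1) False] .
      have "hh k q = 0 \<or> (2*k \<le> hh k q \<and> hh k q < 3*k)" using hhv[OF q(1) False] qq False by auto
      then have "andrasfai_edge k k (hh k q)"
        using edge_dn[OF kn z] edge_up[OF kn hq] k1 by auto
      then show ?thesis using gh[OF False] Ew hq by auto
    qed
  qed
  have gS: "\<And>p q. p < 3*k+2 \<Longrightarrow> q < 3*k+2 \<Longrightarrow> p \<in> {0, k+1, 2*k+1} \<Longrightarrow> andrasfai_edge (k+1) p q \<Longrightarrow> E (g p) (g q)"
  proof -
    fix p q assume a: "p < 3*k+2" "q < 3*k+2" "p \<in> {0, k+1, 2*k+1}" "andrasfai_edge (k+1) p q"
    from a(3) have "p = 0 \<or> p = k+1 \<or> p = 2*k+1" by simp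
    then show "E (g p) (g q)"
    proof (elim disjE)
      assume "p = 0" then show ?thesis using S0[OF a(2)] a(4) g0 by simp
    next
      assume "p = k+1" then show ?thesis using S1[OF a(2)] a(4) g1 by simp
    next
      assume "p = 2*k+1" then show ?thesis using S2[OF a(2)] a(4) g2 by simp
    qed
  qed
  have edges: "\<And>p q. p < 3*k+2 \<Longrightarrow> q < 3*k+2 \<Longrightarrow> andrasfai_edge (k+1) p q \<Longrightarrow> E (g p) (g q)"
  proof -
    fix p q assume pq: "p < 3*k+2" "q < 3*k+2" "andrasfai_edge (k+1) p q"
    show "E (g p) (g q)"
    proof (cases "p \<in> {0, k+1, 2*k+1}")
      case True then show ?thesis using gS pq by blast
    next
      case pF: False
      show ?thesis
      proof (cases "q \<in> {0, k+1, 2*k+1}")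
        case True
        have "andrasfai_edge (k+1) q p" using pq unfolding edge_iff1[OF pq(1,2)] edge_iff1[OF pq(2,1)] by auto
        then show ?thesis using gS[OF pq(2,1) True] Esym by blast
      next
        case qF: False
        have "andrasfai_edge k (hh k p) (hh k q)"
          using hh_props(3)[OF k1, of p q] pq pF qF mm by auto
        then show ?thesis using gh pF qF emb_edge[OF h] hhn pq by auto
      qed
    qed
  qed
  have gV: "\<And>p. p < 3*k+2 \<Longrightarrow> g p \<in> V"
  proof -
    fix p assume p: "p < 3*k+2"
    show "g p \<in> V"
    proof (cases "p \<in> {0, k+1, 2*k+1}")
      case True
      then have "p = 0 \<or> p = k+1 \<or> p = 2*k+1" by simp
      then show ?thesis using g0 g1 g2 xV wV w'V by (elim disjE) simp_all
    next
      case False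
      then show ?thesis using gh[OF False] emb_V[OF h hhn[OF p False]] by simp
    qed
  qed
  have ginj: "inj_on g {0..<3*k+2}"
  proof (rule inj_onI)
    fix p q assume p: "p \<in> {0..<3*k+2}" and q: "q \<in> {0..<3*k+2}" and e: "g p = g q"
    have pl: "p < 3*k+2" and ql: "q < 3*k+2" using p q by auto
    have ne: "k + 1 \<noteq> 2*k+1" "(0::nat) \<noteq> k+1" "(0::nat) \<noteq> 2*k+1" using k1 by auto
    have img: "\<And>r. r < 3*k+2 \<Longrightarrow> r \<notin> {0, k+1, 2*k+1} \<Longrightarrow> g r \<in> h ` {0..<3*k-1}"
    proof -
      fix r assume "r < 3*k+2" "r \<notin> {0, k+1, 2*k+1}"
      then have "hh k r \<in> {0..<3*k-1}" "g r = h (hh k r)" using hhn gh by auto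
      then show "g r \<in> h ` {0..<3*k-1}" by (metis image_eqI)
    qed
    have notimg: "\<And>r. r \<in> {0, k+1, 2*k+1} \<Longrightarrow> g r \<notin> h ` {0..<3*k-1}"
    proof -
      fix r assume "r \<in> {0, k+1, 2*k+1}"
      then have "r = 0 \<or> r = k+1 \<or> r = 2*k+1" by simp
      then show "g r \<notin> h ` {0..<3*k-1}" using g0 g1 g2 xn wn w'n by (elim disjE) simp_all
    qed
    have spd: "\<And>r s. r \<in> {0, k+1, 2*k+1} \<Longrightarrow> s \<in> {0, k+1, 2*k+1} \<Longrightarrow> g r = g s \<Longrightarrow> r = s"
    proof -
      fix r s assume r: "r \<in> {0, k+1, 2*k+1}" and s: "s \<in> {0, k+1, 2*k+1}" and e: "g r = g s"
      from r have r': "r = 0 \<or> r = k+1 \<or> r = 2*k+1" by simp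
      from s have s': "s = 0 \<or> s = k+1 \<or> s = 2*k+1" by simp
      show "r = s" using r' s'
      proof (elim disjE)
        assume "r = 0" "s = k+1" then have "x = w'" using e g0 g1 by simp then show ?thesis using xw1 by simp
      next
        assume "r = 0" "s = 2*k+1" then have "x = w" using e g0 g2 by simp then show ?thesis using xw1 by simp
      next
        assume "r = k+1" "s = 0" then have "x = w'" using e g0 g1 by simp then show ?thesis using xw1 by simp
      next
        assume "r = k+1" "s = 2*k+1" then have "w = w'" using e g1 g2 by simp then show ?thesis using ww by simp
      next
        assume "r = 2*k+1" "s = 0" then have "x = w" using e g0 g2 by simp then show ?thesis using xw1 by simp
      next
        assume "r = 2*k+1" "s = k+1" then have "w = w'" using e g1 g2 by simp then show ?thesis using ww by simp
      qed simp_all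
    qed
    show "p = q"
    proof (cases "p \<in> {0, k+1, 2*k+1}")
      case pT: True
      show ?thesis
      proof (cases "q \<in> {0, k+1, 2*k+1}")
        case True show ?thesis by (rule spd[OF pT True e])
      next
        case False
        have "g q \<in> h ` {0..<3*k-1}" by (rule img[OF ql False])
        moreover have "g q \<notin> h ` {0..<3*k-1}" using notimg[OF pT] unfolding e .
        ultimately show ?thesis by contradiction
      qed
    next
      case pF: False
      show ?thesis
      proof (cases "q \<in> {0, k+1, 2*k+1}")
        case True
        have "g p \<in> h ` {0..<3*k-1}" by (rule img[OF pl pF])
        moreover have "g p \<notin> h ` {0..<3*k-1}" using notimg[OF True] unfolding e[symmetric] .
        ultimately show ?thesis by contradiction
      next
        case qF: False
        have "h (hh k p) = h (hh k q)" using e unfolding gh[OF pF] gh[OF qF] .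
        moreover have "hh k p < 3*k-1" "hh k q < 3*k-1" using hhn[OF pl pF] hhn[OF ql qF] .
        ultimately have hq: "hh k p = hh k q" using emb_inj[OF h] by blast
        have "p < 3*(k+1)-1" "q < 3*(k+1)-1" using pl ql by simp_all
        then show ?thesis using hh_props(2)[OF k1 _ pF _ qF hq] by blast
      qed
    qed
  qed
  have vv: "andrasfai_verts (k+1) = {0..<3*k+2}" by (simp add: andrasfai_verts_def)
  have "andrasfai_subgraph_emb (k+1) V E g"
    unfolding andrasfai_subgraph_emb_def vv
  proof (intro conjI ballI impI)
    show "inj_on g {0..<3*k+2}" by (rule ginj)
    show "g ` {0..<3*k+2} \<subseteq> V" using gV by auto
    fix i j assume "i \<in> {0..<3*k+2}" "j \<in> {0..<3*k+2}" "andrasfai_edge (k+1) i j"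
    then show "E (g i) (g j)" using edges by simp
  qed
  then have "contains_andrasfai (k+1) V E" unfolding contains_andrasfai_def by blast
  then show False using noG by simp
qed

end


context GG begin

lemma core:
  assumes h: "emb h" and xV: "x \<in> V" and xn: "x \<notin> h ` {0..<3*k-1}" and sub: "TT h x \<subseteq> {1..<k}"
    and IH: "IHc (card (TT h x))"
  shows False
proof -
  have z: "0 < 3*k-1" using k1 by simp
  have kn: "k < 3*k-1" using k1 by simp
  obtain w where wV: "w \<in> V" and wn: "w \<notin> h ` {0..<3*k-1}" and xw: "E x w" and Tw: "TT h w = NB k k"
    using claimW[OF h xV xn sub IH] by blast
  define h1 where "h1 = h(k := w)"
  have h1: "emb h1" using swap_emb(1)[OF h kn wV wn Tw] by (simp add: h1_def)
  have im1: "h1 ` {0..<3*k-1} = insert w (h ` ({0..<3*k-1} - {k}))"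
    using swap_emb(2)[OF h kn wV wn Tw] by (simp add: h1_def)
  have "x \<noteq> w" using xw Eirr by auto
  then have xn1: "x \<notin> h1 ` {0..<3*k-1}" using im1 xn by auto
  have kT: "k \<notin> TT h x" using sub by auto
  have T1: "TT h1 x = insert k (TT h x)"
  proof (rule set_eqI)
    fix i show "i \<in> TT h1 x \<longleftrightarrow> i \<in> insert k (TT h x)"
      using xw kn by (cases "i = k") (auto simp: TT_mem h1_def)
  qed
  have Tfull: "TT h x = {1..<k}"
  proof (rule ccontr)
    assume ne: "TT h x \<noteq> {1..<k}"
    have "card (TT h x) < card (TT h1 x)" using T1 kT TT_fin[of h x] by simp
    then have "PP h1 x" using IH h1 xV xn1 unfolding IHc_def by blast
    then obtain j where j: "j < 3*k-1" "TT h1 x = NB k j" unfolding PP_def by blast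
    have NBj: "NB k j = insert k (TT h x)" using j T1 by simp
    have "{1..<k} \<subseteq> TT h x"
    proof
      fix i assume i: "i \<in> {1..<k}"
      have iN: "i < 3*k-1" using i by auto
      show "i \<in> TT h x"
      proof (rule ccontr)
        assume "i \<notin> TT h x"
        then have niN: "i \<notin> NB k j" using NBj i by auto
        have kN: "k \<in> NB k j" using NBj by simp
        have sub2: "\<And>m. m \<in> NB k j \<Longrightarrow> 1 \<le> m \<and> m \<le> k" using NBj sub k1 by auto
        show False
        proof (cases "i = j")
          case True
          have "andrasfai_edge k i k" using kN True unfolding NB_def by auto
          moreover have "\<not> andrasfai_edge k i k" by (rule nedge1) (use iN kn i in auto)
          ultimately show False by simp
        next
          case False
          have "\<not> andrasfai_edge k j i" using niN iN unfolding NB_def by auto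
          then obtain m where m: "m < 3*k-1" "andrasfai_edge k j m" "andrasfai_edge k i m"
            using common_nbr[OF k1 j(1) iN] False by blast
          have "m \<in> NB k j" using m unfolding NB_def by auto
          then have mm: "1 \<le> m" "m \<le> k" using sub2 by auto
          have "\<not> andrasfai_edge k i m" by (rule nedge1) (use iN m(1) i mm in auto)
          then show False using m(3) by simp
        qed
      qed
    qed
    then show False using ne sub by auto
  qed
  note tp = tau_props[OF k1]
  define h2 where "h2 = h \<circ> tau k"
  have h2: "emb h2" using comp_emb(1)[OF h tp(1) tp(2) tp(3)] by (simp add: h2_def)
  have im2: "h2 ` {0..<3*k-1} = h ` {0..<3*k-1}" using comp_emb(2)[OF h tp(1) tp(2) tp(3)] by (simp add: h2_def)
  have T2: "\<And>y. TT h2 y = {i. i < 3*k-1 \<and> tau k i \<in> TT h y}"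
    using comp_emb(3)[OF h tp(1) tp(2) tp(3)] by (simp add: h2_def)
  have c2: "card (TT h2 x) = card (TT h x)" using comp_emb(4)[OF h tp(1) tp(2) tp(3)] by (simp add: h2_def)
  have T2x: "TT h2 x = {1..<k}"
  proof (rule set_eqI)
    fix i
    show "i \<in> TT h2 x \<longleftrightarrow> i \<in> {1..<k}"
    proof
      assume "i \<in> TT h2 x"
      then have a: "i < 3*k-1" "1 \<le> tau k i" "tau k i < k" using T2 Tfull by auto
      have "i + 1 < 3*k" using a(1) by arith
      then show "i \<in> {1..<k}" using tau_val[OF k1 a(1)] a by auto
    next
      assume a: "i \<in> {1..<k}"
      then have i: "i < 3*k-1" by auto
      have "1 \<le> tau k i" "tau k i < k" using tau_val[OF k1 i] a by auto
      then show "i \<in> TT h2 x" using T2 Tfull i by auto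
    qed
  qed
  have xn2: "x \<notin> h2 ` {0..<3*k-1}" using im2 xn by simp
  have sub2: "TT h2 x \<subseteq> {1..<k}" using T2x by simp
  have IH2: "IHc (card (TT h2 x))" using IH c2 by simp
  obtain w' where w'V: "w' \<in> V" and w'n2: "w' \<notin> h2 ` {0..<3*k-1}" and xw': "E x w'" and Tw'2: "TT h2 w' = NB k k"
    using claimW[OF h2 xV xn2 sub2 IH2] by blast
  have w'n: "w' \<notin> h ` {0..<3*k-1}" using w'n2 im2 by simp
  have tk: "tau k k = 0" by (simp add: tau_def)
  have Tw': "TT h w' = NB k 0"
  proof (rule set_eqI)
    fix i
    show "i \<in> TT h w' \<longleftrightarrow> i \<in> NB k 0"
    proof (cases "i < 3*k-1")
      case True
      have ti: "tau k i < 3*k-1" using tp(1)[OF True] .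
      have "i \<in> TT h w' \<longleftrightarrow> tau k (tau k i) \<in> TT h w'" using tp(4)[OF True] by simp
      also have "\<dots> \<longleftrightarrow> tau k i \<in> TT h2 w'" using T2[of w'] ti by simp
      also have "\<dots> \<longleftrightarrow> andrasfai_edge k k (tau k i)" using Tw'2 ti unfolding NB_def by simp
      also have "\<dots> \<longleftrightarrow> andrasfai_edge k (tau k k) (tau k (tau k i))" using tp(3)[OF kn ti] by simp
      also have "\<dots> \<longleftrightarrow> andrasfai_edge k 0 i" using tk tp(4)[OF True] by simp
      also have "\<dots> \<longleftrightarrow> i \<in> NB k 0" using True unfolding NB_def by simp
      finally show ?thesis .
    next
      case False then show ?thesis unfolding NB_def TT_def by simp
    qed
  qed
  show False using bigG[OF h xV wV w'V xn wn w'n xw xw' Tfull Tw Tw'] .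
qed

lemma main: "emb f \<Longrightarrow> x \<in> V \<Longrightarrow> x \<notin> f ` {0..<3*k-1} \<Longrightarrow> PP f x"
proof -
  have z: "0 < 3*k-1" using k1 by simp
  have "\<forall>f x. emb f \<longrightarrow> x \<in> V \<longrightarrow> x \<notin> f ` {0..<3*k-1} \<longrightarrow> 3*k-1 - card (TT f x) = d \<longrightarrow> PP f x" for d
  proof (induction d rule: less_induct)
    case (less d)
    show ?case
    proof (intro allI impI)
      fix f x assume f: "emb f" and xV: "x \<in> V" and xn: "x \<notin> f ` {0..<3*k-1}" and dd: "3*k-1 - card (TT f x) = d"
      have IH: "IHc (card (TT f x))" unfolding IHc_def
      proof (intro allI impI)
        fix h' y assume a: "emb h'" "y \<in> V" "y \<notin> h' ` {0..<3*k-1}" "card (TT f x) < card (TT h' y)"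
        have "3*k-1 - card (TT h' y) < d" using dd a(4) TT_card[of h' y] by linarith
        then show "PP h' y" using less.IH a(1-3) by blast
      qed
      show "PP f x"
      proof (rule ccontr)
        assume nP: "\<not> PP f x"
        have "\<exists>i<3*k-1. i \<notin> TT f x \<and> (\<forall>t\<in>TT f x. \<not> andrasfai_edge k i t)"
        proof (rule ccontr)
          assume "\<not> ?thesis"
          then have mx: "\<And>i. i < 3*k-1 \<Longrightarrow> i \<notin> TT f x \<Longrightarrow> \<exists>t\<in>TT f x. andrasfai_edge k i t" by blast
          have ind: "\<And>a b. a \<in> TT f x \<Longrightarrow> b \<in> TT f x \<Longrightarrow> \<not> andrasfai_edge k a b" using TT_indep[OF f] by blast
          obtain j where "j < 3*k-1" "TT f x = NB k j" using arc[OF k1 TT_sub ind mx] by blast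
          then show False using nP unfolding PP_def by blast
        qed
        then obtain i where i: "i < 3*k-1" "i \<notin> TT f x" and bi: "\<And>t. t \<in> TT f x \<Longrightarrow> \<not> andrasfai_edge k i t" by blast
        note rp = rot_props[OF k1 i(1)]
        define g where "g = f \<circ> rot k i"
        have g: "emb g" using comp_emb(1)[OF f rp(1) rp(2) rp(3)] by (simp add: g_def)
        have gim: "g ` {0..<3*k-1} = f ` {0..<3*k-1}" using comp_emb(2)[OF f rp(1) rp(2) rp(3)] by (simp add: g_def)
        have gc: "card (TT g x) = card (TT f x)" using comp_emb(4)[OF f rp(1) rp(2) rp(3)] by (simp add: g_def)
        have r0: "rot k i 0 = i" using i by (simp add: rot_def)
        have xng: "x \<notin> g ` {0..<3*k-1}" using gim xn by simp
        have n0: "\<not> E x (g 0)" using i r0 by (simp add: g_def TT_mem)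
        have bad: "\<And>p. p < 3*k-1 \<Longrightarrow> andrasfai_edge k 0 p \<Longrightarrow> \<not> E x (g p)"
        proof
          fix p assume p: "p < 3*k-1" "andrasfai_edge k 0 p" and e: "E x (g p)"
          have "rot k i p \<in> TT f x" using e rp(1)[OF p(1)] by (simp add: g_def TT_mem)
          moreover have "andrasfai_edge k i (rot k i p)" using rp(3)[OF z p(1)] p(2) r0 by simp
          ultimately show False using bi by blast
        qed
        have "TT g x \<subseteq> {1..<k} \<or> TT g x \<subseteq> {2*k..<3*k-1}" by (rule side[OF g xV xng n0 bad])
        then show False
        proof
          assume s1: "TT g x \<subseteq> {1..<k}"
          show False using core[OF g xV xng s1] IH gc by simp
        next
          assume s2: "TT g x \<subseteq> {2*k..<3*k-1}"
          note fp = refl0_props[OF k1]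
          define g2 where "g2 = g \<circ> refl0 k"
          have g2: "emb g2" using comp_emb(1)[OF g fp(1) fp(2) fp(3)] by (simp add: g2_def)
          have g2im: "g2 ` {0..<3*k-1} = g ` {0..<3*k-1}" using comp_emb(2)[OF g fp(1) fp(2) fp(3)] by (simp add: g2_def)
          have g2T: "TT g2 x = {m. m < 3*k-1 \<and> refl0 k m \<in> TT g x}" using comp_emb(3)[OF g fp(1) fp(2) fp(3)] by (simp add: g2_def)
          have g2c: "card (TT g2 x) = card (TT g x)" using comp_emb(4)[OF g fp(1) fp(2) fp(3)] by (simp add: g2_def)
          have xng2: "x \<notin> g2 ` {0..<3*k-1}" using g2im xng by simp
          have s3: "TT g2 x \<subseteq> {1..<k}"
          proof
            fix m assume "m \<in> TT g2 x"
            then have a: "m < 3*k-1" "refl0 k m \<in> TT g x" using g2T by auto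
            then have b: "2*k \<le> refl0 k m" using s2 by auto
            have "m + 1 < 3*k" using a(1) by arith
            then show "m \<in> {1..<k}" using refl0_val[OF k1 a(1)] b k1 by auto
          qed
          show False using core[OF g2 xV xng2 s3] IH gc g2c by simp
        qed
      qed
    qed
  qed
  then show "emb f \<Longrightarrow> x \<in> V \<Longrightarrow> x \<notin> f ` {0..<3*k-1} \<Longrightarrow> PP f x" by blast
qed

end

theorem lemma3p4:
  fixes V :: "'a set" and E :: "'a \<Rightarrow> 'a \<Rightarrow> bool" and k :: nat and f :: "nat \<Rightarrow> 'a"
  assumes "k \<ge> 1"
    and "classA V E"
    and "\<not> contains_andrasfai (k + 1) V E"
    and "andrasfai_subgraph_emb k V E f"
  shows "\<forall>q\<in>V. \<exists>h\<in>f ` andrasfai_verts k. is_twin E (f ` andrasfai_verts k) h q"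
proof -
  interpret GG V E k by (rule GG.intro) (use assms in auto)
  have vv: "andrasfai_verts k = {0..<3*k-1}" by (simp add: andrasfai_verts_def)
  show ?thesis
  proof
    fix q assume qV: "q \<in> V"
    show "\<exists>h\<in>f ` andrasfai_verts k. is_twin E (f ` andrasfai_verts k) h q"
    proof (cases "q \<in> f ` andrasfai_verts k")
      case True then show ?thesis unfolding is_twin_def by blast
    next
      case False
      then have "PP f q" using main[OF assms(4) qV] vv by simp
      then obtain j where j: "j < 3*k-1" "TT f q = NB k j" unfolding PP_def by blast
      have "is_twin E (f ` {0..<3*k-1}) (f j) q"
        unfolding is_twin_def
      proof (rule set_eqI)
        fix y
        show "y \<in> {x \<in> f ` {0..<3*k-1}. E (f j) x} \<longleftrightarrow> y \<in> {x \<in> f ` {0..<3*k-1}. E q x}"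
        proof (cases "y \<in> f ` {0..<3*k-1}")
          case True
          then obtain i where i: "i < 3*k-1" "y = f i" by auto
          have "E (f j) (f i) \<longleftrightarrow> andrasfai_edge k j i" using induced[OF assms(4) j(1) i(1)] .
          also have "\<dots> \<longleftrightarrow> i \<in> NB k j" using i unfolding NB_def by auto
          also have "\<dots> \<longleftrightarrow> E q (f i)" using j(2) i by (auto simp: TT_mem)
          finally show ?thesis using True i by auto
        qed auto
      qed
      then show ?thesis using j vv by auto
    qed
  qed
qed


end
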